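(* Let $U$ be a nonempty finite set, $R\subseteq U\times U$ serial and transitive, and $cl$ the closure operator of $M(Reg(U,R))$. Then $cl(X)=X$ for every $X\in Reg(U,R)$; i.e., every regular set is a closed set of $M(Reg(U,R))$.
   Context: $R_s(x)=\{y\in U\mid xRy\}$; $\underline{R}(X)=\{x\mid R_s(x)\subseteq X\}$, $\overline{R}(X)=\{x\mid R_s(x)\cap X\neq\emptyset\}$; $X$ is regular if $X=\underline{R}(\overline{R}(X))$, and $Reg(U,R)$ is the lattice of regular sets under inclusion, with least element $\emptyset$. $h(A)$ is the length of a maximal chain in $[\emptyset,A]$. $M(Reg(U,R))$ is the matroid on $U$ with independent sets $\{X\subseteq U\mid h(Y)\ge|X\cap Y|\ \forall Y\in Reg(U,R)\}$, rank function $r(X)=\max\{|I|\mid I\subseteq X \text{ independent}\}$, and closure operator $cl(X)=\{u\in U\mid r(X\cup\{u\})=r(X)\}$. *)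

theory Defs
  imports Main
begin

definition succ_set :: "('a \<times> 'a) set \<Rightarrow> 'a \<Rightarrow> 'a set" where
  "succ_set R x = {y. (x, y) \<in> R}"

definition lower_approx :: "'a set \<Rightarrow> ('a \<times> 'a) set \<Rightarrow> 'a set \<Rightarrow> 'a set" where
  "lower_approx U R X = {x \<in> U. succ_set R x \<subseteq> X}"

definition upper_approx :: "'a set \<Rightarrow> ('a \<times> 'a) set \<Rightarrow> 'a set \<Rightarrow> 'a set" where
  "upper_approx U R X = {x \<in> U. succ_set R x \<inter> X \<noteq> {}}"

definition regular :: "'a set \<Rightarrow> ('a \<times> 'a) set \<Rightarrow> 'a set \<Rightarrow> bool" where
  "regular U R X \<longleftrightarrow> X \<subseteq> U \<and> X = lower_approx U R (upper_approx U R X)"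

definition Reg :: "'a set \<Rightarrow> ('a \<times> 'a) set \<Rightarrow> 'a set set" where
  "Reg U R = {X. regular U R X}"

definition serial_on :: "'a set \<Rightarrow> ('a \<times> 'a) set \<Rightarrow> bool" where
  "serial_on U R \<longleftrightarrow> (\<forall>x\<in>U. \<exists>y\<in>U. (x, y) \<in> R)"

definition reg_chains :: "'a set \<Rightarrow> ('a \<times> 'a) set \<Rightarrow> 'a set \<Rightarrow> 'a set set set" where
  "reg_chains U R A = {C. C \<subseteq> {Y \<in> Reg U R. Y \<subseteq> A} \<and>
      (\<forall>Y\<in>C. \<forall>Z\<in>C. Y \<subseteq> Z \<or> Z \<subseteq> Y)}"

definition height :: "'a set \<Rightarrow> ('a \<times> 'a) set \<Rightarrow> 'a set \<Rightarrow> nat" where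
  "height U R A = Max ((\<lambda>C. card C - 1) ` reg_chains U R A)"

definition reg_indep :: "'a set \<Rightarrow> ('a \<times> 'a) set \<Rightarrow> 'a set \<Rightarrow> bool" where
  "reg_indep U R X \<longleftrightarrow> X \<subseteq> U \<and> (\<forall>Y\<in>Reg U R. card (X \<inter> Y) \<le> height U R Y)"

definition reg_rank :: "'a set \<Rightarrow> ('a \<times> 'a) set \<Rightarrow> 'a set \<Rightarrow> nat" where
  "reg_rank U R X = Max (card ` {I. I \<subseteq> X \<and> reg_indep U R I})"

definition reg_cl :: "'a set \<Rightarrow> ('a \<times> 'a) set \<Rightarrow> 'a set \<Rightarrow> 'a set" where
  "reg_cl U R X = {u \<in> U. reg_rank U R (X \<union> {u}) = reg_rank U R X}"

end

theory Submission
  imports Defs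
begin

lemma reg_sub: "X \<in> Reg U R \<Longrightarrow> X \<subseteq> U"
  by (simp add: Reg_def regular_def)

lemma reg_eq: "X \<in> Reg U R \<Longrightarrow> X = lower_approx U R (upper_approx U R X)"
  by (simp add: Reg_def regular_def)

lemma reg_mem: "X \<in> Reg U R \<Longrightarrow> x \<in> X \<longleftrightarrow> x \<in> U \<and> (\<forall>y. (x,y)\<in>R \<longrightarrow> y \<in> U \<and> (\<exists>z\<in>X. (y,z)\<in>R))"
proof -
  assume a: "X \<in> Reg U R"
  have "x \<in> X \<longleftrightarrow> x \<in> lower_approx U R (upper_approx U R X)"
    using reg_eq[OF a] by blast
  then show ?thesis
    unfolding lower_approx_def upper_approx_def succ_set_def by blast
qed

lemma empty_reg:
  assumes "serial_on U R"
  shows "{} \<in> Reg U R"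
  using assms unfolding Reg_def regular_def lower_approx_def upper_approx_def succ_set_def serial_on_def
  by auto

lemma inter_reg:
  assumes fin: "finite U" and RU: "R \<subseteq> U \<times> U" and tr: "trans R"
    and X: "X \<in> Reg U R" and Y: "Y \<in> Reg U R"
  shows "X \<inter> Y \<in> Reg U R"
proof -
  have XU: "X \<subseteq> U" using reg_sub[OF X] .
  have sub1: "lower_approx U R (upper_approx U R (X \<inter> Y)) \<subseteq> X \<inter> Y"
  proof -
    have "lower_approx U R (upper_approx U R (X \<inter> Y)) \<subseteq> lower_approx U R (upper_approx U R X)"
      unfolding lower_approx_def upper_approx_def succ_set_def by blast
    moreover have "lower_approx U R (upper_approx U R (X \<inter> Y)) \<subseteq> lower_approx U R (upper_approx U R Y)"
      unfolding lower_approx_def upper_approx_def succ_set_def by blast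
    ultimately show ?thesis using reg_eq[OF X] reg_eq[OF Y] by blast
  qed
  have sub2: "X \<inter> Y \<subseteq> lower_approx U R (upper_approx U R (X \<inter> Y))"
  proof
    fix x assume xXY: "x \<in> X \<inter> Y"
    have xU: "x \<in> U" using xXY XU by blast
    have "\<forall>y. (x,y)\<in>R \<longrightarrow> y \<in> U \<and> (\<exists>z\<in>X \<inter> Y. (y,z)\<in>R)"
    proof (intro allI impI)
      fix y assume xy: "(x,y) \<in> R"
      have yU: "y \<in> U" using xy RU by blast
      from xXY xy reg_mem[OF X] obtain z0 where "z0 \<in> X" "(y,z0) \<in> R" by blast
      then obtain w where yw: "(y,w) \<in> R" and wmin: "\<forall>v. (y,v)\<in>R \<longrightarrow> card (succ_set R w) \<le> card (succ_set R v)"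
        using ex_has_least_nat[of "\<lambda>v. (y,v)\<in>R" z0 "\<lambda>v. card (succ_set R v)"] by blast
      have fs: "\<And>v. finite (succ_set R v)"
        proof -
        fix v have "succ_set R v \<subseteq> U" using RU unfolding succ_set_def by blast
        then show "finite (succ_set R v)" using fin by (rule finite_subset)
      qed
      have eqs: "\<And>v. (w,v) \<in> R \<Longrightarrow> succ_set R v = succ_set R w"
      proof -
        fix v assume wv: "(w,v) \<in> R"
        have s: "succ_set R v \<subseteq> succ_set R w"
          using wv tr unfolding succ_set_def trans_def by blast
        have "(y,v) \<in> R" using yw wv tr unfolding trans_def by blast
        then have "card (succ_set R w) \<le> card (succ_set R v)" using wmin by blast
        then show "succ_set R v = succ_set R w" using card_subset_eq[OF fs s] card_mono[OF fs s] by linarith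
      qed
      have xw: "(x,w) \<in> R" using xy yw tr unfolding trans_def by blast
      from xXY xw reg_mem[OF X] obtain z where zX: "z \<in> X" and wz: "(w,z) \<in> R" by blast
      from xXY xw reg_mem[OF Y] obtain z' where z'Y: "z' \<in> Y" and wz': "(w,z') \<in> R" by blast
      have zU: "z \<in> U" using wz RU by blast
      have zY: "z \<in> Y"
      proof -
        have "\<forall>v. (z,v)\<in>R \<longrightarrow> v \<in> U \<and> (\<exists>t\<in>Y. (v,t)\<in>R)"
        proof (intro allI impI)
          fix v assume zv: "(z,v) \<in> R"
          have "v \<in> succ_set R w" using eqs[OF wz] zv unfolding succ_set_def by blast
          then have wv: "(w,v) \<in> R" unfolding succ_set_def by blast
          have "z' \<in> succ_set R v" using eqs[OF wv] wz' unfolding succ_set_def by blast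
          then show "v \<in> U \<and> (\<exists>t\<in>Y. (v,t)\<in>R)" using z'Y zv RU unfolding succ_set_def by blast
        qed
        then show ?thesis using reg_mem[OF Y] zU by blast
      qed
      have "(y,z) \<in> R" using yw wz tr unfolding trans_def by blast
      then show "y \<in> U \<and> (\<exists>z\<in>X \<inter> Y. (y,z)\<in>R)" using yU zX zY by blast
    qed
    then show "x \<in> lower_approx U R (upper_approx U R (X \<inter> Y))"
      using xU unfolding lower_approx_def upper_approx_def succ_set_def by blast
  qed
  show ?thesis using sub1 sub2 XU unfolding Reg_def regular_def by blast
qed

lemma chains_finite:
  assumes "finite U"
  shows "finite (reg_chains U R A)"
proof -
  have s1: "reg_chains U R A \<subseteq> Pow {Y \<in> Reg U R. Y \<subseteq> A}"
    unfolding reg_chains_def by blast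
  have s2: "{Y \<in> Reg U R. Y \<subseteq> A} \<subseteq> Pow U" using reg_sub by blast
  have "finite {Y \<in> Reg U R. Y \<subseteq> A}" using s2 by (rule finite_subset) (simp add: assms)
  then have "finite (Pow {Y \<in> Reg U R. Y \<subseteq> A})" by simp
  then show ?thesis using s1 by (rule finite_subset[rotated])
qed

lemma height_attained:
  assumes "finite U"
  shows "\<exists>C\<in>reg_chains U R A. height U R A = card C - 1"
proof -
  have "{} \<in> reg_chains U R A" unfolding reg_chains_def by simp
  then have ne: "(\<lambda>C. card C - 1) ` reg_chains U R A \<noteq> {}" by blast
  have fi: "finite ((\<lambda>C. card C - 1) ` reg_chains U R A)" using chains_finite[OF assms] by simp
  have "height U R A \<in> (\<lambda>C. card C - 1) ` reg_chains U R A"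
    unfolding height_def using Max_in[OF fi ne] .
  then show ?thesis by blast
qed

lemma height_ge:
  assumes "finite U" "C \<in> reg_chains U R A"
  shows "card C - 1 \<le> height U R A"
proof -
  have fi: "finite ((\<lambda>C. card C - 1) ` reg_chains U R A)" using chains_finite[OF assms(1)] by simp
  have "card C - 1 \<in> (\<lambda>C. card C - 1) ` reg_chains U R A" using assms(2) by blast
  then show ?thesis unfolding height_def using Max_ge[OF fi] by blast
qed

lemma height_less:
  assumes fin: "finite U" and ser: "serial_on U R" and W: "W \<in> Reg U R" and Y: "Y \<in> Reg U R"
    and WY: "W \<subset> Y"
  shows "height U R W < height U R Y"
proof -
  obtain C where C: "C \<in> reg_chains U R W" and hC: "height U R W = card C - 1"
    using height_attained[OF fin] by blast
  define C' where "C' = insert {} (insert Y C)"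
  have Cc: "C \<subseteq> {Z \<in> Reg U R. Z \<subseteq> W}" "\<forall>Z1\<in>C. \<forall>Z2\<in>C. Z1 \<subseteq> Z2 \<or> Z2 \<subseteq> Z1"
    using C unfolding reg_chains_def by auto
  have C'c: "C' \<in> reg_chains U R Y"
    unfolding reg_chains_def C'_def using Cc WY Y empty_reg[OF ser] by blast
  have "C \<subseteq> Pow U" using Cc(1) reg_sub by blast
  then have finC: "finite C" by (rule finite_subset) (simp add: fin)
  have YC: "Y \<notin> C" using Cc WY by blast
  have "card (insert Y C) = Suc (card C)" using finC YC by simp
  moreover have "card (insert Y C) \<le> card C'" unfolding C'_def using finC by (simp add: card_insert_le)
  moreover have "Y \<noteq> {}" using WY by blast
  then have "card {{}, Y} \<le> card C'" unfolding C'_def using finC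
    by (intro card_mono) auto
  moreover have "card {{}, Y} = 2" using \<open>Y \<noteq> {}\<close> by simp
  ultimately have "card C - 1 < card C' - 1" by linarith
  then show ?thesis using hC height_ge[OF fin C'c] by linarith
qed

lemma rank_attained:
  assumes fin: "finite U" and XU: "X \<subseteq> U"
  shows "\<exists>I. I \<subseteq> X \<and> reg_indep U R I \<and> reg_rank U R X = card I"
proof -
  have "{} \<in> {I. I \<subseteq> X \<and> reg_indep U R I}" unfolding reg_indep_def by simp
  moreover have "finite {I. I \<subseteq> X \<and> reg_indep U R I}"
    proof -
    have "{I. I \<subseteq> X \<and> reg_indep U R I} \<subseteq> Pow U" using XU by blast
    then show ?thesis by (rule finite_subset) (simp add: fin)
  qed
  ultimately have "reg_rank U R X \<in> card ` {I. I \<subseteq> X \<and> reg_indep U R I}"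
    unfolding reg_rank_def by (intro Max_in) auto
  then show ?thesis by blast
qed

lemma rank_ge:
  assumes fin: "finite U" and XU: "X \<subseteq> U" and I: "I \<subseteq> X" "reg_indep U R I"
  shows "card I \<le> reg_rank U R X"
proof -
  have "finite {I. I \<subseteq> X \<and> reg_indep U R I}"
    proof -
    have "{I. I \<subseteq> X \<and> reg_indep U R I} \<subseteq> Pow U" using XU by blast
    then show ?thesis by (rule finite_subset) (simp add: fin)
  qed
  then show ?thesis unfolding reg_rank_def using I by auto
qed

theorem proposition7:
  fixes U :: "'a set" and R :: "('a \<times> 'a) set"
  assumes "finite U" and "U \<noteq> {}"
    and "R \<subseteq> U \<times> U"
    and "serial_on U R"
    and "trans R"
    and "X \<in> Reg U R"
  shows "reg_cl U R X = X"
proof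
  have XU: "X \<subseteq> U" using reg_sub[OF assms(6)] .
  show "X \<subseteq> reg_cl U R X"
  proof
    fix x assume x: "x \<in> X"
    then have "X \<union> {x} = X" by blast
    then show "x \<in> reg_cl U R X" using XU x unfolding reg_cl_def by (simp add: subset_iff)
  qed
  show "reg_cl U R X \<subseteq> X"
  proof
    fix u assume u: "u \<in> reg_cl U R X"
    then have uU: "u \<in> U" and eq: "reg_rank U R (X \<union> {u}) = reg_rank U R X"
      unfolding reg_cl_def by auto
    show "u \<in> X"
    proof (rule ccontr)
      assume uX: "u \<notin> X"
      obtain I where I: "I \<subseteq> X" "reg_indep U R I" "reg_rank U R X = card I"
        using rank_attained[OF assms(1) XU] by blast
      have "I \<subseteq> U" using I(1) XU by blast
      then have finI: "finite I" using assms(1) by (rule finite_subset)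
      have ind: "reg_indep U R (insert u I)"
        unfolding reg_indep_def
      proof (intro conjI ballI)
        show "insert u I \<subseteq> U" using I(1) XU uU by blast
        fix Y assume Y: "Y \<in> Reg U R"
        show "card (insert u I \<inter> Y) \<le> height U R Y"
        proof (cases "u \<in> Y")
          case False
          then have "insert u I \<inter> Y = I \<inter> Y" by blast
          then show ?thesis using I(2) Y unfolding reg_indep_def by simp
        next
          case True
          have W: "X \<inter> Y \<in> Reg U R" using inter_reg[OF assms(1,3,5,6) Y] .
          have "X \<inter> Y \<subset> Y" using True uX by blast
          then have hl: "height U R (X \<inter> Y) < height U R Y"
            using height_less[OF assms(1,4) W Y] by blast
          have "I \<inter> Y = I \<inter> (X \<inter> Y)" using I(1) by blast
          then have "card (I \<inter> Y) \<le> height U R (X \<inter> Y)"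
            using I(2) W unfolding reg_indep_def by simp
          moreover have "insert u I \<inter> Y = insert u (I \<inter> Y)" using True by blast
          moreover have "u \<notin> I \<inter> Y" using uX I(1) by blast
          ultimately show ?thesis using finI hl by simp
        qed
      qed
      have s1: "X \<union> {u} \<subseteq> U" using XU uU by blast
      have s2: "insert u I \<subseteq> X \<union> {u}" using I(1) by blast
      have "card (insert u I) \<le> reg_rank U R (X \<union> {u})"
        using rank_ge[OF assms(1) s1 s2 ind] .
      moreover have "card (insert u I) = Suc (card I)" proof -
        have "u \<notin> I" using uX I(1) by blast
        then show ?thesis using finI by simp
      qed
      ultimately show False using eq I(3) by simp
    qed
  qed
qed

end
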